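(* Let $C_n(a,b)$ be a connected $2$-regular circulant digraph, let $l\ge1$, $0\le k\le l$ with $la+k(b-a)=\omega n$ for a positive integer $\omega$, and let $Q$ be the set of positive divisors of $\gcd(l,k)$ that are coprime with $\omega$. Then $\varphi$ maps $\bigcup_{q\in Q}\mathbb{L}_2^q(l,k)\times\mathbb{Z}_n$ into $\mathcal{P}_{l,k}(C_n(a,b))$, and this map is surjective.
   Context: Let $n\ge 2$ and $0<a<b<n$ be integers with $\gcd(n,a,b)=1$. $C_n(a,b)$ has vertex set $\mathbb{Z}_n$ and directed bonds $(v,v+a)$, $(v,v+b)$ (addition mod $n$), with step sizes $a$, $b$. A path of length $l$ is a sequence of bonds $(e_1,\dots,e_l)$ with the terminus of $e_j$ equal to the origin of $e_{j+1}$; its $b$-count is the number of bonds of step size $b$; its step sequence is the sequence of step sizes; a circuit is a path whose last terminus equals its first origin. A periodic orbit is an equivalence class of circuits under cyclic rotation; it is primitive if it is not $[c_0^r]$ for a circuit $c_0$ and $r>1$ ($c_0^r$ = concatenation of $r$ copies). $\mathcal{P}_{l,k}(C_n(a,b))$ is the set of primitive periodic orbits of length $l$ and $b$-count $k$. Words over $\{a,b\}$ are ordered lexicographically with $a\prec b$; a word is Lyndon if strictly smaller than all its nontrivial cyclic rotations; $\mathbb{L}_2(l,k)$ is the set of Lyndon words of length $l$ with exactly $k$ letters $b$, and for $q\mid\gcd(l,k)$, $\mathbb{L}_2^q(l,k)=\{x^q: x\in\mathbb{L}_2(l/q,k/q)\}$. Identifying letters $a,b$ with step sizes $a,b$, $\psi(w,v)$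 is the unique path starting at vertex $v$ with step sequence $w$; when it is a circuit, $\varphi(w,v)=[\psi(w,v)]$. *)

theory Defs
  imports Main
begin

text \<open>Circulant digraph C_n(a,b): vertices 0..<n (representing Z_n); a bond is a
pair (origin, terminus).  Words over {a,b} are bool lists: False = letter a,
True = letter b, so the order a < b is False < True.\<close>

definition bonds :: "nat \<Rightarrow> nat \<Rightarrow> nat \<Rightarrow> (nat \<times> nat) set" where
  "bonds n a b = {(u, (u + a) mod n) | u. u < n} \<union> {(u, (u + b) mod n) | u. u < n}"

definition is_path :: "nat \<Rightarrow> nat \<Rightarrow> nat \<Rightarrow> (nat \<times> nat) list \<Rightarrow> bool" where
  "is_path n a b p \<longleftrightarrow> set p \<subseteq> bonds n a b \<and>
     (\<forall>j. Suc j < length p \<longrightarrow> snd (p ! j) = fst (p ! Suc j))"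

definition is_circuit :: "nat \<Rightarrow> nat \<Rightarrow> nat \<Rightarrow> (nat \<times> nat) list \<Rightarrow> bool" where
  "is_circuit n a b c \<longleftrightarrow> is_path n a b c \<and> c \<noteq> [] \<and> snd (last c) = fst (hd c)"

definition bcount :: "nat \<Rightarrow> nat \<Rightarrow> (nat \<times> nat) list \<Rightarrow> nat" where
  "bcount n b p = length (filter (\<lambda>e. snd e = (fst e + b) mod n) p)"

definition orbit :: "'e list \<Rightarrow> 'e list set" where
  "orbit c = {rotate i c | i. True}"

definition primitive_orbit :: "nat \<Rightarrow> nat \<Rightarrow> nat \<Rightarrow> (nat \<times> nat) list set \<Rightarrow> bool" where
  "primitive_orbit n a b Orb \<longleftrightarrow>
     \<not> (\<exists>c0 r. r > 1 \<and> is_circuit n a b c0 \<and> Orb = orbit (concat (replicate r c0)))"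

definition P_orbits :: "nat \<Rightarrow> nat \<Rightarrow> nat \<Rightarrow> nat \<Rightarrow> nat \<Rightarrow> (nat \<times> nat) list set set" where
  "P_orbits n a b l k = {Orb. \<exists>c. is_circuit n a b c \<and> Orb = orbit c \<and> length c = l \<and>
       bcount n b c = k \<and> primitive_orbit n a b Orb}"

definition lyndon :: "bool list \<Rightarrow> bool" where
  "lyndon w \<longleftrightarrow> (\<forall>i. 0 < i \<and> i < length w \<longrightarrow> lexordp (<) w (rotate i w))"

definition L2 :: "nat \<Rightarrow> nat \<Rightarrow> bool list set" where
  "L2 l k = {w. length w = l \<and> count_list w True = k \<and> lyndon w}"

definition L2q :: "nat \<Rightarrow> nat \<Rightarrow> nat \<Rightarrow> bool list set" where
  "L2q q l k = {concat (replicate q x) | x. x \<in> L2 (l div q) (k div q)}"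

fun psi :: "nat \<Rightarrow> nat \<Rightarrow> nat \<Rightarrow> bool list \<Rightarrow> nat \<Rightarrow> (nat \<times> nat) list" where
  "psi n a b [] v = []"
| "psi n a b (x # w) v =
     (let v' = (v + (if x then b else a)) mod n in (v, v') # psi n a b w v')"

definition varphi :: "nat \<Rightarrow> nat \<Rightarrow> nat \<Rightarrow> bool list \<Rightarrow> nat \<Rightarrow> (nat \<times> nat) list set" where
  "varphi n a b w v = orbit (psi n a b w v)"

end

theory Submission imports Defs begin

lemma lexc: "List.lexordp (<) (x::bool list) y = ord_class.lexordp x y"
  by (simp add: List.lexordp_def lexordp_conv_lexord)

definition pw :: "'x list \<Rightarrow> nat \<Rightarrow> 'x list" where "pw x q = concat (replicate q x)"

lemma length_pw[simp]: "length (pw x q) = q * length x"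
  unfolding pw_def by (induct q) auto

lemma count_pw[simp]: "count_list (pw x q) t = q * count_list x t"
  unfolding pw_def by (induct q) auto

lemma nth_pw: "i < q * length x \<Longrightarrow> pw x q ! i = x ! (i mod length x)"
proof (induct q arbitrary: i)
  case 0 then show ?case by simp
next
  case (Suc q)
  show ?case
  proof (cases "i < length x")
    case True then show ?thesis by (simp add: pw_def nth_append)
  next
    case False
    then have "i - length x < q * length x" using Suc.prems by auto
    then have "pw x q ! (i - length x) = x ! ((i - length x) mod length x)" using Suc.hyps by blast
    moreover have "(i - length x) mod length x = i mod length x" using False
      by (simp add: mod_if)
    ultimately show ?thesis using False by (simp add: pw_def nth_append)
  qed
qed

lemma pw_add: "pw x (p + q) = pw x p @ pw x q"
  unfolding pw_def by (simp add: replicate_add)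

lemma pw_mult: "pw x (e * g) = pw (pw x e) g"
proof (induct g)
  case 0 then show ?case by (simp add: pw_def)
next
  case (Suc g)
  have "pw x (e * Suc g) = pw x e @ pw x (e * g)" by (simp add: pw_add[symmetric])
  then show ?case using Suc by (simp add: pw_def)
qed

lemma rotate_pw: "0 < p \<Longrightarrow> rotate j (pw y p) = pw (rotate j y) p"
proof (cases "y = []")
  case True then show ?thesis by (simp add: pw_def)
next
  case False
  assume p: "0 < p"
  show ?thesis
  proof (rule nth_equalityI)
    show "length (rotate j (pw y p)) = length (pw (rotate j y) p)" by simp
    fix i assume "i < length (rotate j (pw y p))"
    then have i: "i < p * length y" by simp
    have m: "(j + i) mod (p * length y) mod length y = (j + i) mod length y"
      by (simp add: mod_mod_cancel)
    have "rotate j (pw y p) ! i = y ! ((j + i) mod length y)"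
      using i False p by (simp add: nth_rotate nth_pw m)
    moreover have "pw (rotate j y) p ! i = y ! ((j + i) mod length y)"
      using i False by (simp add: nth_pw nth_rotate mod_add_right_eq)
    ultimately show "rotate j (pw y p) ! i = pw (rotate j y) p ! i" by simp
  qed
qed

lemma rotate_inj: "rotate i A = rotate i B \<Longrightarrow> A = B"
  by (induct i) (auto dest: injD[OF inj_rotate1])

lemma rotate_comm: "rotate i (rotate j A) = rotate j (rotate i A)"
  by (simp add: rotate_rotate add.commute)

lemma lyndon_nonfix: "lyndon x \<Longrightarrow> 0 < i \<Longrightarrow> i < length x \<Longrightarrow> rotate i x \<noteq> x"
proof
  assume l: "lyndon x" "0 < i" "i < length x" "rotate i x = x"
  have "\<not> List.lexordp (<) x x" by (simp add: lexc lexordp_irreflexive')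
  then show False using l unfolding lyndon_def by metis
qed

lemma pw_rot_fix:
  assumes "0 < q" "rotate d (pw x q) = pw x q" "x \<noteq> []"
  shows "rotate (d mod length x) x = x"
proof (rule nth_equalityI)
  show "length (rotate (d mod length x) x) = length x" by simp
  fix i assume "i < length (rotate (d mod length x) x)"
  then have i: "i < length x" by simp
  then have i': "i < q * length x" using assms(1)
  proof -
    have "length x \<le> q * length x" using assms(1) by simp
    then show ?thesis using i by linarith
  qed
  have dq: "(d + i) mod (q * length x) < q * length x" using assms(1,3) by simp
  have "rotate d (pw x q) ! i = pw x q ! i" using assms(2) by simp
  then have "x ! ((d + i) mod (q * length x) mod length x) = x ! i"
    using i i' dq by (simp add: nth_rotate nth_pw)
  then have "x ! ((d + i) mod length x) = x ! i" by (simp add: mod_mod_cancel)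
  then show "rotate (d mod length x) x ! i = x ! i"
    using i by (simp add: nth_rotate mod_add_left_eq)
qed

lemma count_rotate[simp]: "count_list (rotate i s) t = count_list s t"
proof -
  have "count_list (rotate1 s) t = count_list s t" for s by (cases s) auto
  then show ?thesis by (induct i) auto
qed

definition dsp :: "nat \<Rightarrow> nat \<Rightarrow> bool list \<Rightarrow> nat" where
  "dsp a b w = length w * a + count_list w True * (b - a)"

definition stp :: "nat \<Rightarrow> nat \<Rightarrow> (nat \<times> nat) list \<Rightarrow> bool list" where
  "stp n b p = map (\<lambda>e. snd e = (fst e + b) mod n) p"

lemma dsp_Cons: "a \<le> b \<Longrightarrow> dsp a b (x # w) = (if x then b else a) + dsp a b w"
proof -
  assume "a \<le> b"
  then obtain d where "b = a + d" using le_Suc_ex by blast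
  then show ?thesis by (simp add: dsp_def algebra_simps)
qed

lemma psi_Nil_iff[simp]: "psi n a b w v = [] \<longleftrightarrow> w = []"
  by (cases w) (auto simp: Let_def)

lemma dsp_pw: "dsp a b (pw x q) = q * dsp a b x"
  by (simp add: dsp_def algebra_simps)

lemma length_psi[simp]: "length (psi n a b w v) = length w"
  by (induct w arbitrary: v) (auto simp: Let_def)

lemma mod_neq: "a < b \<Longrightarrow> b < n \<Longrightarrow> (v + a) mod n \<noteq> (v + b) mod (n::nat)"
proof
  assume ab: "a < b" "b < n" and e: "(v + a) mod n = (v + b) mod n"
  then have "n dvd (v + b) - (v + a)" using mod_eq_dvd_iff_nat[of "v+a" "v+b" n] by simp
  then have "n dvd b - a" by simp
  then have "n \<le> b - a" using ab by (intro dvd_imp_le) auto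
  then show False using ab by linarith
qed

lemma is_path_Cons: "is_path n a b (e # p) \<longleftrightarrow>
   e \<in> bonds n a b \<and> (p \<noteq> [] \<longrightarrow> snd e = fst (hd p)) \<and> is_path n a b p"
proof
  assume h: "is_path n a b (e # p)"
  then have s: "\<forall>j. Suc j < length (e#p) \<longrightarrow> snd ((e#p) ! j) = fst ((e#p) ! Suc j)"
    unfolding is_path_def by blast
  have "p \<noteq> [] \<longrightarrow> snd e = fst (hd p)"
    using s[rule_format, of 0] by (auto simp: hd_conv_nth)
  moreover have "\<forall>j. Suc j < length p \<longrightarrow> snd (p ! j) = fst (p ! Suc j)"
    using s by (metis Suc_less_eq length_Cons nth_Cons_Suc)
  ultimately show "e \<in> bonds n a b \<and> (p \<noteq> [] \<longrightarrow> snd e = fst (hd p)) \<and> is_path n a b p"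
    using h unfolding is_path_def by auto
next
  assume h: "e \<in> bonds n a b \<and> (p \<noteq> [] \<longrightarrow> snd e = fst (hd p)) \<and> is_path n a b p"
  have "snd ((e#p) ! j) = fst ((e#p) ! Suc j)" if "Suc j < length (e#p)" for j
  proof (cases j)
    case 0 then show ?thesis using h that by (cases p) auto
  next
    case (Suc j') then show ?thesis using h that unfolding is_path_def by auto
  qed
  then show "is_path n a b (e # p)" using h unfolding is_path_def by auto
qed

lemma is_path_Nil[simp]: "is_path n a b []"
  unfolding is_path_def by auto

lemma is_path_snoc: "is_path n a b (p @ [e]) \<longleftrightarrow>
   is_path n a b p \<and> e \<in> bonds n a b \<and> (p \<noteq> [] \<longrightarrow> snd (last p) = fst e)"
proof (induct p)
  case Nil show ?case by (simp add: is_path_Cons)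
next
  case (Cons x p)
  have "is_path n a b ((x # p) @ [e]) \<longleftrightarrow> x \<in> bonds n a b \<and> snd x = fst (hd (p @ [e])) \<and> is_path n a b (p @ [e])"
    by (simp add: is_path_Cons)
  also have "\<dots> \<longleftrightarrow> is_path n a b (x # p) \<and> e \<in> bonds n a b \<and> snd (last (x # p)) = fst e"
    unfolding Cons.hyps is_path_Cons by (cases p) auto
  finally show ?case by simp
qed

lemma psi_hd: "w \<noteq> [] \<Longrightarrow> fst (hd (psi n a b w v)) = v"
  by (cases w) (auto simp: Let_def)

lemma psi_path: "v < n \<Longrightarrow> is_path n a b (psi n a b w v)"
proof (induct w arbitrary: v)
  case Nil then show ?case by simp
next
  case (Cons x w)
  have n: "0 < n" using Cons.prems by simp
  define v' where "v' = (v + (if x then b else a)) mod n"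
  have "v' < n" using n v'_def by simp
  then have P1: "is_path n a b (psi n a b w v')" using Cons.hyps by blast
  have B1: "(v, v') \<in> bonds n a b"
  proof (cases x)
    case True
    then have "(v, v') \<in> {(u, (u + b) mod n) |u. u < n}" using Cons.prems v'_def by simp
    then show ?thesis unfolding bonds_def by (rule UnI2)
  next
    case False
    then have "(v, v') \<in> {(u, (u + a) mod n) |u. u < n}" using Cons.prems v'_def by simp
    then show ?thesis unfolding bonds_def by (rule UnI1)
  qed
  have H1: "psi n a b w v' \<noteq> [] \<longrightarrow> snd (v, v') = fst (hd (psi n a b w v'))"
    using psi_hd[of w n a b v'] by simp
  have eq: "psi n a b (x#w) v = (v, v') # psi n a b w v'" unfolding v'_def by (simp only: psi.simps Let_def)
  show ?case unfolding eq is_path_Cons using B1 H1 P1 by blast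
qed

lemma psi_last: "a \<le> b \<Longrightarrow> w \<noteq> [] \<Longrightarrow> snd (last (psi n a b w v)) = (v + dsp a b w) mod n"
proof (induct w arbitrary: v)
  case Nil then show ?case by simp
next
  case (Cons x w)
  show ?case
  proof (cases "w = []")
    case True then show ?thesis using Cons.prems by (simp add: Let_def dsp_def)
  next
    case False
    then have "snd (last (psi n a b (x # w) v)) = ((v + (if x then b else a)) mod n + dsp a b w) mod n"
      using Cons by (simp add: Let_def)
    also have "\<dots> = (v + dsp a b (x # w)) mod n"
      using Cons.prems by (simp add: dsp_Cons mod_add_left_eq add.assoc)
    finally show ?thesis .
  qed
qed

lemma stp_psi: "a < b \<Longrightarrow> b < n \<Longrightarrow> stp n b (psi n a b w v) = w"
  by (induct w arbitrary: v) (auto simp: stp_def Let_def mod_neq)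

lemma bcount_psi: "a < b \<Longrightarrow> b < n \<Longrightarrow> bcount n b (psi n a b w v) = count_list w True"
  by (induct w arbitrary: v) (auto simp: bcount_def Let_def mod_neq)

lemma path_recover: "a < b \<Longrightarrow> b < n \<Longrightarrow> is_path n a b p \<Longrightarrow> p \<noteq> [] \<Longrightarrow>
   p = psi n a b (stp n b p) (fst (hd p))"
proof (induct p)
  case Nil then show ?case by simp
next
  case (Cons e p)
  have eb: "e \<in> bonds n a b" and pp: "is_path n a b p" and c: "p \<noteq> [] \<longrightarrow> snd e = fst (hd p)"
    using Cons.prems is_path_Cons by auto
  have e: "snd e = (fst e + (if snd e = (fst e + b) mod n then b else a)) mod n"
    using eb unfolding bonds_def by auto
  show ?case
  proof (cases "p = []")
    case True then show ?thesis using e by (simp add: stp_def Let_def prod_eq_iff)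
  next
    case False
    then have "p = psi n a b (stp n b p) (snd e)" using Cons c pp by auto
    then show ?thesis using e by (simp add: stp_def Let_def prod_eq_iff)
  qed
qed

lemma bonds_fst: "e \<in> bonds n a b \<Longrightarrow> fst e < n"
  unfolding bonds_def by auto

lemma psi_append: "0 < n \<Longrightarrow> a \<le> b \<Longrightarrow> v < n \<Longrightarrow>
   psi n a b (w1 @ w2) v = psi n a b w1 v @ psi n a b w2 ((v + dsp a b w1) mod n)"
proof (induct w1 arbitrary: v)
  case Nil then show ?case by (simp add: dsp_def)
next
  case (Cons x w1)
  let ?v = "(v + (if x then b else a)) mod n"
  have "psi n a b (w1 @ w2) ?v = psi n a b w1 ?v @ psi n a b w2 ((?v + dsp a b w1) mod n)"
    using Cons by simp
  moreover have "(?v + dsp a b w1) mod n = (v + dsp a b (x # w1)) mod n"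
    using Cons.prems by (simp add: dsp_Cons mod_add_left_eq add.assoc)
  ultimately show ?case by (simp add: Let_def)
qed

lemma psi_pw: "0 < n \<Longrightarrow> a \<le> b \<Longrightarrow> v < n \<Longrightarrow> (v + dsp a b z) mod n = v \<Longrightarrow>
   psi n a b (pw z g) v = pw (psi n a b z v) g"
  by (induct g) (auto simp: pw_def psi_append)

lemma circuit_rotate1: "is_circuit n a b c \<Longrightarrow> is_circuit n a b (rotate1 c)"
proof -
  assume h: "is_circuit n a b c"
  then obtain e p where c: "c = e # p" unfolding is_circuit_def by (cases c) auto
  show ?thesis
  proof (cases "p = []")
    case True then show ?thesis using h c by simp
  next
    case False
    have "is_path n a b (e # p)" "snd (last (e # p)) = fst (hd (e#p))" using h c unfolding is_circuit_def by auto
    then show ?thesis using False c unfolding is_circuit_def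
      by (auto simp: is_path_Cons is_path_snoc)
  qed
qed

lemma circuit_rotate: "is_circuit n a b c \<Longrightarrow> is_circuit n a b (rotate i c)"
  by (induct i) (auto intro: circuit_rotate1)

lemma orbit_rotate: "orbit (rotate j c) = orbit c"
proof -
  have "rotate i c \<in> orbit (rotate j c)" for i
  proof (cases "c = []")
    case True then show ?thesis unfolding orbit_def by auto
  next
    case False
    let ?L = "length c"
    have L: "0 < ?L" using False by simp
    have "(i + (?L - j mod ?L) + j) mod ?L = i mod ?L"
    proof -
      have e: "i + (?L - j mod ?L) + j = (i + ?L) + (j div ?L) * ?L"
        using L mod_less_divisor[OF L, of j] div_mult_mod_eq[of j ?L] by linarith
      show ?thesis by (subst e) simp
    qed
    then have "rotate (i + (?L - j mod ?L)) (rotate j c) = rotate i c"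
      by (metis rotate_rotate rotate_conv_mod)
    then show ?thesis unfolding orbit_def by (intro CollectI exI[of _ "i + (?L - j mod ?L)"]) simp
  qed
  then show ?thesis unfolding orbit_def by (auto simp: rotate_rotate)
qed

lemma stp_rotate: "stp n b (rotate i c) = rotate i (stp n b c)"
  by (simp add: stp_def rotate_map)

lemma stp_pw: "stp n b (pw c r) = pw (stp n b c) r"
  by (simp add: stp_def pw_def map_concat)


lemma pw_rot_len: "0 < r \<Longrightarrow> rotate (length z) (pw z r) = pw z r"
  by (simp add: rotate_pw)

lemma rotate_mult_fix: "rotate d s = s \<Longrightarrow> rotate (m * d) s = s"
proof (induct m)
  case 0 then show ?case by simp
next
  case (Suc m)
  have "rotate (Suc m * d) s = rotate d (rotate (m * d) s)" by (simp add: rotate_rotate add.commute)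
  then show ?case using Suc by simp
qed

lemma ex_min_lex:
  fixes A :: "bool list set"
  shows "finite A \<Longrightarrow> A \<noteq> {} \<Longrightarrow> \<exists>m\<in>A. \<forall>x\<in>A. \<not> ord_class.lexordp x m"
proof (induct A rule: finite_induct)
  case empty then show ?case by simp
next
  case (insert y A)
  show ?case
  proof (cases "A = {}")
    case True then show ?thesis by (simp add: lexordp_irreflexive')
  next
    case False
    then obtain m where m: "m \<in> A" "\<forall>x\<in>A. \<not> ord_class.lexordp x m" using insert by blast
    show ?thesis
    proof (cases "ord_class.lexordp y m")
      case True
      have "\<forall>x\<in>insert y A. \<not> ord_class.lexordp x y"
        using m True lexordp_trans lexordp_irreflexive' by blast
      then show ?thesis by blast
    next
      case False
      then show ?thesis using m by blast
    qed
  qed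
qed

lemma lyndon_exists:
  fixes s :: "bool list"
  assumes "s \<noteq> []"
  shows "\<exists>j x p. 0 < p \<and> x \<noteq> [] \<and> lyndon x \<and> rotate j s = pw x p"
proof -
  define L where "L = length s"
  have L0: "0 < L" using assms L_def by simp
  define P where "P = (\<lambda>d. 0 < d \<and> rotate d s = s)"
  have PL: "P L" unfolding P_def L_def using L0 L_def by simp
  define d where "d = (LEAST d. P d)"
  have Pd: "P d" unfolding d_def using PL by (rule LeastI)
  then have d0: "0 < d" and ds: "rotate d s = s" unfolding P_def by auto
  have dL: "d \<le> L" unfolding d_def using PL by (rule Least_le)
  have dmin: "rotate d' s \<noteq> s" if "0 < d'" "d' < d" for d'
  proof -
    have "\<not> P d'" using not_less_Least[of d' P] that(2) unfolding d_def by blast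
    then show ?thesis using that(1) unfolding P_def by blast
  qed
  have "rotate (L mod d) s = s"
  proof -
    have "rotate L s = s" unfolding L_def by simp
    moreover have "rotate L s = rotate (L mod d) (rotate ((L div d) * d) s)"
      by (simp add: rotate_rotate)
    ultimately show ?thesis using rotate_mult_fix[OF ds] by simp
  qed
  then have Lmod: "L mod d = 0" using dmin[of "L mod d"] d0 by (meson mod_less_divisor not_gr0)
  define p where "p = L div d"
  have Lp: "L = p * d" unfolding p_def using Lmod div_mult_mod_eq[of L d] by simp
  then have p0: "0 < p" using L0 by (cases p) auto
  define y where "y = take d s"
  have ly: "length y = d" unfolding y_def using dL L_def by simp
  have smod: "i < L \<Longrightarrow> s ! i = s ! (i mod d)" for i
  proof (induct i rule: less_induct)
    case (less i)
    show ?case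
    proof (cases "i < d")
      case True then show ?thesis by simp
    next
      case False
      have "rotate d s ! (i - d) = s ! ((d + (i - d)) mod L)"
        using less.prems L_def by (simp add: nth_rotate)
      then have "s ! (i - d) = s ! i" using ds False less.prems by simp
      moreover have "s ! (i - d) = s ! ((i - d) mod d)" using less False d0 by simp
      moreover have "(i - d) mod d = i mod d" using False by (simp add: mod_if)
      ultimately show ?thesis by simp
    qed
  qed
  have spw: "s = pw y p"
  proof (rule nth_equalityI)
    show "length s = length (pw y p)" using Lp ly L_def by simp
    fix i assume "i < length s"
    then have i: "i < L" using L_def by simp
    then have "pw y p ! i = y ! (i mod d)" using nth_pw[of i p y] Lp ly by simp
    also have "\<dots> = s ! (i mod d)" unfolding y_def using d0 by simp
    finally show "s ! i = pw y p ! i" using smod[OF i] by simp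
  qed
  have yprim: "rotate i y \<noteq> y" if "0 < i" "i < d" for i
  proof
    assume "rotate i y = y"
    then have "rotate i s = s" using spw rotate_pw[OF p0, of i y] by simp
    then show False using dmin that by blast
  qed
  obtain m where m: "m \<in> (\<lambda>j. rotate j y) ` {..<d}"
    "\<forall>x\<in>(\<lambda>j. rotate j y) ` {..<d}. \<not> ord_class.lexordp x m"
    using ex_min_lex[of "(\<lambda>j. rotate j y) ` {..<d}"] d0 by auto
  then obtain j0 where j0: "j0 < d" "m = rotate j0 y" by auto
  define x where "x = rotate j0 y"
  have lx: "length x = d" using ly x_def by simp
  have "lyndon x" unfolding lyndon_def
  proof (intro allI impI)
    fix i assume i: "0 < i \<and> i < length x"
    have "rotate i x = rotate ((i + j0) mod d) y" unfolding x_def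
      by (simp add: rotate_rotate ly[symmetric] rotate_conv_mod[of "i + j0"])
    then have "\<not> ord_class.lexordp (rotate i x) x" using m j0 x_def by auto
    moreover have "rotate i x \<noteq> x"
    proof
      assume "rotate i x = x"
      then have "rotate j0 (rotate i y) = rotate j0 y" unfolding x_def by (simp add: rotate_comm)
      then have "rotate i y = y" by (rule rotate_inj)
      then show False using yprim i lx by auto
    qed
    ultimately show "List.lexordp (<) x (rotate i x)" using lexordp_linear lexc by blast
  qed
  moreover have "rotate j0 s = pw x p" using spw rotate_pw[OF p0] x_def by simp
  moreover have "x \<noteq> []" using lx d0 by auto
  ultimately show ?thesis using p0 by blast
qed

lemma dsp_rotate[simp]: "dsp a b (rotate i w) = dsp a b w"
  by (simp add: dsp_def)

theorem mainTheorem14: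
  fixes n a b l k \<omega> :: nat
  assumes "n \<ge> 2" and "0 < a" and "a < b" and "b < n"
    and "gcd n (gcd a b) = 1"
    and "l \<ge> 1" and "k \<le> l"
    and "\<omega> > 0" and "l * a + k * (b - a) = \<omega> * n"
  defines "Q \<equiv> {q. 0 < q \<and> q dvd gcd l k \<and> coprime q \<omega>}"
  shows "(\<forall>q\<in>Q. \<forall>w\<in>L2q q l k. \<forall>v<n.
            is_circuit n a b (psi n a b w v) \<and> varphi n a b w v \<in> P_orbits n a b l k)
       \<and> P_orbits n a b l k \<subseteq> {varphi n a b w v | q w v. q \<in> Q \<and> w \<in> L2q q l k \<and> v < n}"
proof
  have n0: "0 < n" using assms(1) by simp
  have ab: "a \<le> b" using assms(3) by simp
  note ab' = assms(3) assms(4)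
  show "\<forall>q\<in>Q. \<forall>w\<in>L2q q l k. \<forall>v<n.
            is_circuit n a b (psi n a b w v) \<and> varphi n a b w v \<in> P_orbits n a b l k"
  proof (intro ballI allI impI)
    fix q w v assume qQ: "q \<in> Q" and wL: "w \<in> L2q q l k" and v: "v < n"
    have q0: "0 < q" and ql: "q dvd l" and qk: "q dvd k" and cq: "coprime q \<omega>"
      using qQ unfolding Q_def by auto
    obtain x where w: "w = pw x q" and xL: "x \<in> L2 (l div q) (k div q)"
      using wL unfolding L2q_def pw_def by auto
    have lx: "length x = l div q" and cx: "count_list x True = k div q" and lyn: "lyndon x"
      using xL unfolding L2_def by auto
    have lw: "length w = l" using w lx ql by simp
    have cw: "count_list w True = k" using w cx qk by simp
    have dw: "dsp a b w = \<omega> * n" using lw cw assms(9) by (simp add: dsp_def)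
    have wne: "w \<noteq> []" using lw assms(6) by auto
    have xne: "x \<noteq> []" using wne w by (auto simp: pw_def)
    define c where "c = psi n a b w v"
    have circ: "is_circuit n a b c"
      unfolding is_circuit_def c_def
      using psi_path[OF v] wne psi_last[OF ab wne] psi_hd[OF wne] dw v by simp
    have prim: "primitive_orbit n a b (orbit c)"
      unfolding primitive_orbit_def
    proof
      assume "\<exists>c0 r. 1 < r \<and> is_circuit n a b c0 \<and> orbit c = orbit (concat (replicate r c0))"
      then obtain c0 r where r1: "1 < r" and c0: "is_circuit n a b c0"
        and oe: "orbit c = orbit (pw c0 r)" unfolding pw_def by blast
      have "pw c0 r \<in> orbit (pw c0 r)" unfolding orbit_def by (intro CollectI exI[of _ 0]) simp
      then obtain i where ci: "pw c0 r = rotate i c" using oe unfolding orbit_def by auto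
      define z where "z = stp n b c0"
      have zr: "pw z r = rotate i w"
        using arg_cong[OF ci, of "stp n b"] unfolding z_def stp_pw stp_rotate c_def
        using stp_psi[OF ab'] by simp
      have c0ne: "c0 \<noteq> []" and c0p: "is_path n a b c0" and c0cl: "snd (last c0) = fst (hd c0)"
        using c0 unfolding is_circuit_def by auto
      define u where "u = fst (hd c0)"
      have u: "u < n" unfolding u_def using c0ne c0p bonds_fst unfolding is_path_def
        by (metis hd_in_set subsetD)
      have c0eq: "c0 = psi n a b z u" unfolding z_def u_def using path_recover[OF ab' c0p c0ne] .
      have zne: "z \<noteq> []" using c0ne z_def stp_def by simp
      have "snd (last c0) = u" using c0cl u_def by simp
      then have "(u + dsp a b z) mod n = u" using psi_last[OF ab zne, of n u] c0eq by simp
      then have "u mod n = (u + dsp a b z) mod n" using u by simp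
      then have "n dvd dsp a b z" using mod_eq_dvd_iff_nat[of u "u + dsp a b z" n] by simp
      then obtain t where t: "dsp a b z = n * t" unfolding dvd_def by blast
      have lz: "r * length z = l" using arg_cong[OF zr, of length] lw by simp
      have cz: "r * count_list z True = k" using arg_cong[OF zr, of "\<lambda>w. count_list w True"] cw by simp
      have "rotate (length z) (rotate i w) = rotate i w" using pw_rot_len[of r z] r1 zr by simp
      then have "rotate i (rotate (length z) w) = rotate i w" by (simp add: rotate_comm)
      then have "rotate (length z) (pw x q) = pw x q" using rotate_inj w by blast
      then have "rotate (length z mod length x) x = x" using pw_rot_fix q0 xne by blast
      then have "length z mod length x = 0" using lyndon_nonfix[OF lyn] xne
        by (meson length_greater_0_conv mod_less_divisor not_gr0)
      then have "length x dvd length z" by (simp add: dvd_eq_mod_eq_0)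
      then obtain e where e: "length z = e * length x" unfolding dvd_def by (metis mult.commute)
      have lq: "q * length x = l" using lx ql by simp
      have "r * e * length x = q * length x" using lz lq e by (simp add: mult.assoc)
      then have qre: "q = r * e" using xne by simp
      have kq: "q * count_list x True = k" using cx qk by simp
      have "r * count_list z True = r * (e * count_list x True)" using cz kq qre by (simp add: mult.assoc)
      then have cze: "count_list z True = e * count_list x True" using r1 by simp
      have dz: "dsp a b z = e * dsp a b x" using e cze by (simp add: dsp_def algebra_simps)
      have "q * dsp a b x = \<omega> * n" using dw w dsp_pw by simp
      then have "\<omega> * n = r * (n * t)" using qre dz t by (simp add: algebra_simps)
      then have "\<omega> = r * t" using n0 by (simp add: algebra_simps)
      then have "r dvd \<omega>" "r dvd q" using qre by auto
      then have "r dvd 1" using cq by (metis coprime_common_divisor)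
      then show False using r1 by simp
    qed
    show "is_circuit n a b (psi n a b w v) \<and> varphi n a b w v \<in> P_orbits n a b l k"
      using circ prim lw cw bcount_psi[OF ab'] unfolding P_orbits_def varphi_def c_def by auto
  qed
next
  have n0: "0 < n" using assms(1) by simp
  have ab: "a \<le> b" using assms(3) by simp
  note ab' = assms(3) assms(4)
  show "P_orbits n a b l k \<subseteq> {varphi n a b w v | q w v. q \<in> Q \<and> w \<in> L2q q l k \<and> v < n}"
  proof
    fix Orb assume "Orb \<in> P_orbits n a b l k"
    then obtain c where circ: "is_circuit n a b c" and Oc: "Orb = orbit c" and lc: "length c = l"
      and bc: "bcount n b c = k" and prim: "primitive_orbit n a b Orb"
      unfolding P_orbits_def by auto
    have cne: "c \<noteq> []" and cp: "is_path n a b c" using circ unfolding is_circuit_def by auto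
    define s where "s = stp n b c"
    have ceq: "c = psi n a b s (fst (hd c))" unfolding s_def using path_recover[OF ab' cp cne] .
    have ls: "length s = l" using lc s_def stp_def by simp
    have cs: "count_list s True = k" using bc ceq bcount_psi[OF ab'] by metis
    have sne: "s \<noteq> []" using ls assms(6) by auto
    obtain j x p where p0: "0 < p" and xne: "x \<noteq> []" and lyn: "lyndon x"
      and sj: "rotate j s = pw x p" using lyndon_exists[OF sne] by blast
    define c' where "c' = rotate j c"
    have circ': "is_circuit n a b c'" unfolding c'_def using circ by (rule circuit_rotate)
    have c'ne: "c' \<noteq> []" and c'p: "is_path n a b c'" using circ' unfolding is_circuit_def by auto
    define v' where "v' = fst (hd c')"
    have v': "v' < n" unfolding v'_def using c'ne c'p bonds_fst unfolding is_path_def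
      by (metis hd_in_set subsetD)
    have c'eq: "c' = psi n a b (pw x p) v'"
      unfolding v'_def using path_recover[OF ab' c'p c'ne] sj
      unfolding c'_def stp_rotate s_def by simp
    have Oc': "Orb = orbit c'" using Oc orbit_rotate[of j c] c'_def by simp
    have lp: "l = p * length x" using arg_cong[OF sj, of length] ls by simp
    have kp: "k = p * count_list x True" using arg_cong[OF sj, of "\<lambda>w. count_list w True"] cs by simp
    have ds: "dsp a b s = \<omega> * n" using ls cs assms(9) by (simp add: dsp_def)
    have dx: "p * dsp a b x = \<omega> * n" using arg_cong[OF sj, of "dsp a b"] ds dsp_pw by simp
    have cop: "coprime p \<omega>"
    proof (rule ccontr)
      assume nc: "\<not> coprime p \<omega>"
      define g where "g = gcd p \<omega>"
      have g1: "1 < g" using nc p0 unfolding g_def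
        by (metis coprime_iff_gcd_eq_1 gcd_pos_nat less_one nat_neq_iff)
      obtain e where pe: "p = e * g" using g_def by (metis dvd_def gcd_dvd1 mult.commute)
      obtain o' where og: "\<omega> = g * o'" using g_def by (metis dvd_def gcd_dvd2)
      have e0: "0 < e" using pe p0 by simp
      have "g * (e * dsp a b x) = g * (o' * n)" using dx pe og by (simp add: algebra_simps)
      then have de: "e * dsp a b x = o' * n" using g1 by simp
      define z where "z = pw x e"
      have dz: "dsp a b z = o' * n" using de z_def dsp_pw by simp
      have zcl: "(v' + dsp a b z) mod n = v'" using dz v' by simp
      have zne: "z \<noteq> []" using z_def xne e0 by (simp add: pw_def)
      define c0 where "c0 = psi n a b z v'"
      have c0c: "is_circuit n a b c0" unfolding is_circuit_def c0_def
        using psi_path[OF v'] zne psi_last[OF ab zne] psi_hd[OF zne] zcl by simp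
      have "c' = pw c0 g" unfolding c'eq c0_def
        using pe pw_mult[of x e g] psi_pw[OF n0 ab v' zcl] z_def by simp
      then have "Orb = orbit (concat (replicate g c0))" using Oc' unfolding pw_def by simp
      then show False using prim g1 c0c unfolding primitive_orbit_def by blast
    qed
    have pQ: "p \<in> Q" unfolding Q_def using p0 cop lp kp by auto
    have xL: "x \<in> L2 (l div p) (k div p)" unfolding L2_def using lp kp p0 lyn by simp
    have "pw x p \<in> L2q p l k" unfolding L2q_def pw_def using xL by blast
    moreover have "Orb = varphi n a b (pw x p) v'" unfolding varphi_def using Oc' c'eq by simp
    ultimately show "Orb \<in> {varphi n a b w v | q w v. q \<in> Q \<and> w \<in> L2q q l k \<and> v < n}"
      using pQ v' by blast
  qed
qed

end
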